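(* Let $K$, $\alpha$, $E$ and $\varepsilon$ be as in the context, and suppose $\delta(K,\varepsilon)(E)<1/\alpha$. Let $g,h:(0,\infty)\to\mathbb{R}$ be non-decreasing functions with $g(r)\le h(r)$ for all $r\in(0,\infty)\setminus E$. Put $\alpha(r)=1+\varepsilon(r)$. Then there exists $R\ge1$ such that $g(r)\le h(\alpha(r)r)$ for all $r\ge R$.
   Context: $K:(0,\infty)\to(0,\infty)$ is one of: (1) $K\equiv1$; (2) $K(x)=x$; (3) a strictly increasing, continuous, concave function with $1\le K(x)\le x$ for $x\ge1$ satisfying $K(2x)\le\alpha K(x)$ for all $x\ge R_0$, for some constants $\alpha\in(1,2]$, $R_0\ge1$. In case (1) take $\alpha=1$, in case (2) take $\alpha=2$ (so in all cases $K(2x)\le\alpha K(x)$ for large $x$). $E\subset[1,\infty)$ is a measurable set with $\int_E\frac{dx}{K(x)}<\infty$, and $\varepsilon:(0,\infty)\to(0,1]$ is a function. The $K$-density of $E$ relative to $\varepsilon$ is $$\delta(K,\varepsilon)(E)=\limsup_{r\to\infty}\frac{\frac{K(r)}{r}\int_{E\cap[r,\infty)}\frac{dx}{K(x)}}{\varepsilon(r)}.$$ *)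

theory Defs
  imports "HOL-Analysis.Analysis"
begin

definition admissible_K :: "(real \<Rightarrow> real) \<Rightarrow> real \<Rightarrow> bool" where
  "admissible_K K \<alpha> \<longleftrightarrow>
     ((\<forall>x>0. K x = 1) \<and> \<alpha> = 1)
   \<or> ((\<forall>x>0. K x = x) \<and> \<alpha> = 2)
   \<or> ((\<forall>x>0. K x > 0) \<and> strict_mono_on {0<..} K \<and> continuous_on {0<..} K
       \<and> concave_on {0<..} K \<and> (\<forall>x\<ge>1. 1 \<le> K x \<and> K x \<le> x)
       \<and> 1 < \<alpha> \<and> \<alpha> \<le> 2
       \<and> (\<exists>R0\<ge>1. \<forall>x\<ge>R0. K (2 * x) \<le> \<alpha> * K x))"

text \<open>The K-density of E relative to eps (an extended real, since the limsup may be infinite).\<close>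
definition K_density :: "(real \<Rightarrow> real) \<Rightarrow> (real \<Rightarrow> real) \<Rightarrow> real set \<Rightarrow> ereal" where
  "K_density K \<epsilon> E =
     Limsup at_top (\<lambda>r. ereal ((K r / r) * (LINT x:(E \<inter> {r..})|lborel. 1 / K x) / \<epsilon> r))"

end

theory Submission
  imports Defs
begin

lemma K_props:
  assumes "admissible_K K \<alpha>"
  shows "1 \<le> \<alpha> \<and> (\<forall>x>0. K x > 0) \<and> continuous_on {0<..} K \<and>
    (\<exists>R0\<ge>1. \<forall>r\<ge>R0. \<forall>x. r \<le> x \<and> x \<le> 2*r \<longrightarrow> K x \<le> \<alpha> * K r)"
  using assms unfolding admissible_K_def
proof (elim disjE conjE)
  assume 1: "\<forall>x>0. K x = 1" and a: "\<alpha> = 1"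
  have "continuous_on {0<..} K"
    using continuous_on_cong[of "{0<..}" "{0<..}" K "\<lambda>_. 1::real"] 1 by auto
  then show ?thesis using 1 a by (intro conjI exI[of _ 1]) auto
next
  assume 1: "\<forall>x>0. K x = x" and a: "\<alpha> = 2"
  have "continuous_on {0<..} K"
    using continuous_on_cong[of "{0<..}" "{0<..}" K "\<lambda>x. x::real"] 1 continuous_on_id by auto
  then show ?thesis using 1 a by (intro conjI exI[of _ 1]) auto
next
  assume pos: "\<forall>x>0. K x > 0" and sm: "strict_mono_on {0<..} K" and c: "continuous_on {0<..} K"
    and a1: "1 < \<alpha>" and ex: "\<exists>R0\<ge>1. \<forall>x\<ge>R0. K (2 * x) \<le> \<alpha> * K x"
  from ex obtain R0 where R0: "R0 \<ge> 1" "\<forall>x\<ge>R0. K (2 * x) \<le> \<alpha> * K x" by blast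
  have "\<forall>r\<ge>R0. \<forall>x. r \<le> x \<and> x \<le> 2*r \<longrightarrow> K x \<le> \<alpha> * K r"
  proof (intro allI impI)
    fix r x assume r: "r \<ge> R0" and x: "r \<le> x \<and> x \<le> 2*r"
    have "K x \<le> K (2*r)"
    proof (cases "x = 2*r")
      case False
      then have "x < 2*r" using x by auto
      have "K x < K (2*r)" by (rule strict_mono_onD[OF sm]) (use x r R0(1) \<open>x < 2*r\<close> in auto)
      then show ?thesis by simp
    qed simp
    also have "\<dots> \<le> \<alpha> * K r" using R0 r by auto
    finally show "K x \<le> \<alpha> * K r" .
  qed
  then show ?thesis using pos c a1 R0(1) by auto
qed

theorem lemma1:
  fixes K \<epsilon> g h :: "real \<Rightarrow> real" and \<alpha> :: real and E :: "real set"
  assumes K: "admissible_K K \<alpha>"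
    and E_meas: "E \<in> sets lborel"
    and E_sub: "E \<subseteq> {1..}"
    and E_fin: "(\<integral>\<^sup>+ x\<in>E. ennreal (1 / K x) \<partial>lborel) < \<infinity>"
    and eps: "\<forall>r>0. 0 < \<epsilon> r \<and> \<epsilon> r \<le> 1"
    and dens: "K_density K \<epsilon> E < ereal (1 / \<alpha>)"
    and g_mono: "mono_on {0<..} g"
    and h_mono: "mono_on {0<..} h"
    and gh: "\<forall>r. 0 < r \<and> r \<notin> E \<longrightarrow> g r \<le> h r"
  shows "\<exists>R\<ge>1. \<forall>r\<ge>R. g r \<le> h ((1 + \<epsilon> r) * r)"
proof -
  from K_props[OF K] obtain R0 where a1: "1 \<le> \<alpha>" and Kpos: "\<forall>x>0. K x > 0"
    and Kc: "continuous_on {0<..} K" and R0: "R0 \<ge> 1"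
    and KR: "\<forall>r\<ge>R0. \<forall>x. r \<le> x \<and> x \<le> 2*r \<longrightarrow> K x \<le> \<alpha> * K r" by blast
  define I where "I r = (LINT x:(E \<inter> {r..})|lborel. 1 / K x)" for r
  have "eventually (\<lambda>r. ereal ((K r / r) * I r / \<epsilon> r) < ereal (1 / \<alpha>)) at_top"
    using Limsup_lessD[OF dens[unfolded K_density_def]] unfolding I_def by simp
  then obtain R1 where R1: "\<forall>r\<ge>R1. (K r / r) * I r / \<epsilon> r < 1 / \<alpha>"
    unfolding eventually_at_top_linorder by auto
  have meas0: "(\<lambda>x. indicator {0<..} x *\<^sub>R (1 / K x)) \<in> borel_measurable borel"
    by (rule borel_measurable_continuous_on_indicator) (use Kpos in \<open>auto intro!: continuous_intros Kc simp: less_imp_neq[symmetric]\<close>)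
  show ?thesis
  proof (intro exI[of _ "max R0 R1"] conjI allI impI)
    show "1 \<le> max R0 R1" using R0 by auto
    fix r assume r: "max R0 R1 \<le> r"
    then have r0: "r > 0" "r \<ge> R0" "r \<ge> R1" using R0 by auto
    have ep: "0 < \<epsilon> r" "\<epsilon> r \<le> 1" using eps r0 by auto
    show "g r \<le> h ((1 + \<epsilon> r) * r)"
    proof (rule ccontr)
      assume neg: "\<not> ?thesis"
      define b where "b = (1 + \<epsilon> r) * r"
      have rb: "r \<le> b" "b \<le> 2 * r" using ep r0 by (auto simp: b_def algebra_simps)
      have sub: "{r..b} \<subseteq> E"
      proof
        fix s assume s: "s \<in> {r..b}"
        show "s \<in> E"
        proof (rule ccontr)
          assume "s \<notin> E"
          then have "g s \<le> h s" using gh s r0 by auto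
          moreover have "g r \<le> g s" using g_mono s r0 by (auto intro: mono_onD)
          moreover have "h s \<le> h b" using h_mono s r0 by (auto intro: mono_onD)
          ultimately show False using neg b_def by auto
        qed
      qed
      define f where "f x = indicator (E \<inter> {r..}) x *\<^sub>R (1 / K x)" for x
      have fm: "f \<in> borel_measurable lborel"
      proof -
        have "f = (\<lambda>x. indicator (E \<inter> {r..}) x * (indicator {0<..} x *\<^sub>R (1 / K x)))"
          using E_sub by (auto simp: f_def fun_eq_iff indicator_def)
        moreover have "(\<lambda>x. indicator (E \<inter> {r..}) x * (indicator {0<..} x *\<^sub>R (1 / K x))) \<in> borel_measurable borel"
          by (rule borel_measurable_times[OF borel_measurable_indicator meas0]) (use E_meas in auto)
        ultimately show ?thesis by simp
      qed
      have fnn: "0 \<le> f x" for x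
      proof (cases "x \<in> E")
        case True
        then have "x > 0" using E_sub by force
        then show ?thesis using Kpos by (auto simp: f_def indicator_def less_imp_le)
      qed (simp add: f_def)
      have fint: "integrable lborel f"
      proof (rule integrableI_nonneg[OF fm])
        show "AE x in lborel. 0 \<le> f x" using fnn by simp
        have "(\<integral>\<^sup>+ x. ennreal (f x) \<partial>lborel) \<le> (\<integral>\<^sup>+ x\<in>E. ennreal (1 / K x) \<partial>lborel)"
          by (intro nn_integral_mono) (auto simp: f_def indicator_def)
        then show "(\<integral>\<^sup>+ x. ennreal (f x) \<partial>lborel) < \<infinity>" using E_fin by auto
      qed
      define c where "c = 1 / (\<alpha> * K r)"
      have Kr: "K r > 0" using Kpos r0 by auto
      have cpos: "c > 0" using a1 Kr by (auto simp: c_def)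
      have lo: "c * indicator {r..b} x \<le> f x" for x
      proof (cases "x \<in> {r..b}")
        case True
        then have "x \<in> E \<inter> {r..}" using sub by auto
        moreover have "K x \<le> \<alpha> * K r" "K x > 0" using KR True rb r0 Kpos by auto
        ultimately show ?thesis using True Kr a1
          by (auto simp: f_def c_def intro!: divide_left_mono mult_pos_pos)
      next
        case False
        then show ?thesis using fnn[of x] by simp
      qed
      have "c * (b - r) = (LINT x|lborel. c * indicator {r..b} x)"
        using rb by simp
      also have "\<dots> \<le> (LINT x|lborel. f x)"
        by (rule integral_mono[OF _ fint]) (use lo rb in auto)
      also have "\<dots> = I r" by (simp add: I_def f_def set_lebesgue_integral_def)
      finally have Ib: "c * (\<epsilon> r * r) \<le> I r" by (simp add: b_def algebra_simps)
      have "1 / \<alpha> = (K r / r) * (c * (\<epsilon> r * r)) / \<epsilon> r"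
        using Kr ep r0 a1 by (simp add: c_def field_simps)
      also have "\<dots> \<le> (K r / r) * I r / \<epsilon> r"
        using Ib Kr ep r0 by (intro divide_right_mono mult_left_mono) auto
      finally show False using R1 r0 by auto
    qed
  qed
qed

end
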